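(* Let $\gamma\in(0,2)$, $d\ge1$ and $G\in\mathscr S^d_\gamma$. Then there exist $H^G_1\in L^1(\mathbb R^d)$ and a constant $C_1=C_1(G)>0$ such that for all $\hat u\in\mathbb R^d$, $$\sup_{s\in[0,T]}|\Delta^{\gamma/2}G_s(\hat u)|\le H^G_1(\hat u)\le C_1.$$
   Context: Fix $T>0$; $c_\gamma>0$ with $\sum_{\hat z\ne0}c_\gamma|\hat z|^{-d-\gamma}=1$. $\Delta^{\gamma/2}G(\hat u)=c_\gamma\lim_{\varepsilon\to0^+}\int_{\{|\hat v-\hat u|\ge\varepsilon\}}\frac{G(\hat u)-G(\hat v)}{|\hat v-\hat u|^{d+\gamma}}\mathrm d\hat v$. For $k\in\mathbb N$, $\mathscr S^k(\mathbb R^d)$ is the set of continuous $G:[0,\infty)\times\mathbb R^d\to\mathbb R$ whose spatial partial derivatives up to order $k$ exist and are continuous, such that for all $r\in\mathbb N$ and $j\le k$, $\sup_{(s,\hat u)\in[0,T]\times\mathbb R^d}|\hat u|^r[G_s]_j(\hat u)<\infty$, where $[G_s]_j=|G_s|+\sum_{m=1}^j\sum_{i_1,\dots,i_m=1}^d|\partial_{i_1}\cdots\partial_{i_m}G_s|$. $\mathscr S^k_c(\mathbb R^d)$: those $G\in\mathscr S^k(\mathbb R^d)$ for which there is a compact $K$ with $\sup_{s\in[0,T]}|G_s(\hat u)|=0$ for $\hat u\notin K$. $\mathscr S^d_\gamma=\mathscr S^2_c(\mathbb R^d)$ if $\gamma\in(0,1]$ or $d\ge2$, and $\mathscr S^2(\mathbb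 R)$ if $d=1,\gamma\in(1,2)$. *)

theory Defs
  imports "HOL-Analysis.Analysis"
begin

text \<open>Space R^d is modelled as real^'n with d = CARD('n).
  Time-dependent test functions are G :: real => real^'n => real, G s u = G_s(u).\<close>

definition lattice_nonzero :: "(real^'n) set" where
  "lattice_nonzero = {z. (\<forall>i. z $ i \<in> \<int>)} - {0}"

definition c_gamma :: "real \<Rightarrow> 'n::finite itself \<Rightarrow> real" where
  "c_gamma \<gamma> _ = 1 / infsum (\<lambda>z::real^'n. norm z powr (-(real CARD('n) + \<gamma>)))
      lattice_nonzero"

definition frac_lap :: "real \<Rightarrow> (real^'n::finite \<Rightarrow> real) \<Rightarrow> real^'n \<Rightarrow> real" where
  "frac_lap \<gamma> f u = c_gamma \<gamma> TYPE('n) *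
     Lim (at_right 0) (\<lambda>\<epsilon>. LINT v:{v. dist v u \<ge> \<epsilon>}|lborel.
         (f u - f v) / dist v u powr (real CARD('n) + \<gamma>))"

definition pderiv_i :: "'n::finite \<Rightarrow> (real^'n \<Rightarrow> real) \<Rightarrow> real^'n \<Rightarrow> real" where
  "pderiv_i i f x = deriv (\<lambda>t. f (x + t *\<^sub>R axis i 1)) 0"

fun pderivs :: "'n::finite list \<Rightarrow> (real^'n \<Rightarrow> real) \<Rightarrow> real^'n \<Rightarrow> real" where
  "pderivs [] f = f"
| "pderivs (i # is) f = pderiv_i i (pderivs is f)"

definition bracket :: "nat \<Rightarrow> (real^'n::finite \<Rightarrow> real) \<Rightarrow> real^'n \<Rightarrow> real" where
  "bracket j f u = \<bar>f u\<bar> +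
     (\<Sum>m\<in>{1..j}. \<Sum>is\<in>{is::'n list. length is = m}. \<bar>pderivs is f u\<bar>)"

definition Sk :: "real \<Rightarrow> nat \<Rightarrow> (real \<Rightarrow> real^'n::finite \<Rightarrow> real) set" where
  "Sk T k = {G.
     \<comment> \<open>spatial partial derivatives up to order k exist\<close>
     (\<forall>is i. length is < k \<longrightarrow> (\<forall>s\<ge>0. \<forall>x.
        (\<lambda>t. pderivs is (G s) (x + t *\<^sub>R axis i 1)) differentiable (at 0)))
     \<comment> \<open>G and these derivatives are continuous on [0,oo) x R^d\<close>
   \<and> (\<forall>is. length is \<le> k \<longrightarrow>
        continuous_on ({0..} \<times> UNIV) (\<lambda>(s, x). pderivs is (G s) x))
     \<comment> \<open>decay\<close>
   \<and> (\<forall>r::nat. \<forall>j\<le>k. \<exists>M. \<forall>s\<in>{0..T}. \<forall>u. norm u ^ r * bracket j (G s) u \<le> M)}"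

definition Sk_c :: "real \<Rightarrow> nat \<Rightarrow> (real \<Rightarrow> real^'n::finite \<Rightarrow> real) set" where
  "Sk_c T k = {G \<in> Sk T k. \<exists>K. compact K \<and> (\<forall>u. u \<notin> K \<longrightarrow> (\<forall>s\<in>{0..T}. G s u = 0))}"

definition S_gamma :: "real \<Rightarrow> real \<Rightarrow> (real \<Rightarrow> real^'n::finite \<Rightarrow> real) set" where
  "S_gamma T \<gamma> = (if \<gamma> \<le> 1 \<or> CARD('n) \<ge> 2 then Sk_c T 2 else Sk T 2)"

end

theory Submission
  imports Defs "HOL-Analysis.Analysis"
begin


lemma dyadic_ge1:
  fixes y :: real assumes "y \<ge> 1"
  shows "\<exists>k::nat. 2^k \<le> y \<and> y < 2^(Suc k)"
proof -
  have m: "nat \<lfloor>y\<rfloor> \<ge> 1" using assms by linarith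
  obtain n where n: "2^n \<le> nat \<lfloor>y\<rfloor>" "nat \<lfloor>y\<rfloor> < (2::nat)^(n+1)"
    using ex_power_ivl1[of 2, OF _ m] by auto
  have a: "real (2^n) \<le> real (nat \<lfloor>y\<rfloor>)" using n(1) by linarith
  have b: "real (nat \<lfloor>y\<rfloor>) \<le> y" using assms by linarith
  have c: "real (nat \<lfloor>y\<rfloor>) + 1 \<le> real (2^(n+1))" using n(2) by linarith
  have d: "y < real (nat \<lfloor>y\<rfloor>) + 1" using assms by linarith
  have e: "(2::real)^n = real (2^n)" "(2::real)^(Suc n) = real (2^(n+1))" by simp_all
  have "(2::real)^n \<le> y" using a b e by linarith
  moreover have "y < (2::real)^(Suc n)" using c d e by linarith
  ultimately show ?thesis by blast
qed

lemma dyadic_le1: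
  fixes y :: real assumes "0 < y" "y \<le> 1"
  shows "\<exists>k::nat. (1/2)^(Suc k) < y \<and> y \<le> (1/2)^k"
proof -
  obtain k :: nat where k: "2^k \<le> 1/y" "1/y < 2^(Suc k)" using dyadic_ge1[of "1/y"] assms by auto
  have "y \<le> (1/2)^k" using k(1) assms by (simp add: power_one_over field_simps)
  moreover have "(1/2)^(Suc k) < y" using k(2) assms by (simp add: power_one_over field_simps del: power_Suc)
  ultimately show ?thesis by blast
qed



lemma two_pow_powr: "((2::real)^k) powr a = (2 powr a)^k"
  by (simp add: powr_realpow[symmetric] powr_powr mult.commute)

lemma geom_ennreal:
  fixes q c :: real assumes "0 \<le> q" "q < 1" "0 \<le> c"
  shows "(\<Sum>k. ennreal (c * q^k)) < \<infinity>"
proof -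
  have s: "summable (\<lambda>k. c * q^k)" using assms by (intro summable_mult summable_geometric) auto
  have "(\<Sum>k. ennreal (c * q^k)) = ennreal (\<Sum>k. c * q^k)"
    using assms s by (intro suminf_ennreal2) auto
  then show ?thesis by simp
qed

lemma int_far:
  fixes \<alpha> :: real assumes "\<alpha> > real CARD('n::finite)"
  shows "integrable lborel (\<lambda>x::real^'n. indicator {x. 1 \<le> norm x} x * norm x powr (-\<alpha>))"
proof (rule integrableI_nonneg)
  show "(\<lambda>x::real^'n. indicator {x. 1 \<le> norm x} x * norm x powr (-\<alpha>)) \<in> borel_measurable lborel"
    by measurable
  show "AE x in lborel. 0 \<le> indicator {x. 1 \<le> norm x} x * norm (x::real^'n) powr (-\<alpha>)"
    by auto
  define d where "d = CARD('n)"
  define V where "V = unit_ball_vol (real d)"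
  define q where "q = 2 powr (real d - \<alpha>)"
  have q: "0 \<le> q" "q < 1" using assms by (auto simp: q_def d_def intro!: powr_less_one)
  have V: "V \<ge> 0" by (simp add: V_def)
  let ?a = "\<lambda>k::nat. ennreal ((2 powr (-\<alpha>))^k)"
  have pw: "ennreal (indicator {x. 1 \<le> norm x} x * norm x powr (-\<alpha>)) \<le>
       (\<Sum>k. ?a k * indicator (cball 0 (2^(Suc k))) x)" for x :: "real^'n"
  proof (cases "1 \<le> norm x")
    case True
    obtain k :: nat where k: "2^k \<le> norm x" "norm x < 2^(Suc k)" using dyadic_ge1[OF True] by blast
    have "norm x powr (-\<alpha>) \<le> (2^k) powr (-\<alpha>)"
      using k assms by (intro powr_mono2') auto
    also have "\<dots> = (2 powr (-\<alpha>))^k" by (rule two_pow_powr)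
    finally have "ennreal (indicator {x. 1 \<le> norm x} x * norm x powr (-\<alpha>)) \<le> ?a k * indicator (cball 0 (2^(Suc k))) x"
      using True k by (auto intro: ennreal_leI)
    also have "\<dots> \<le> (\<Sum>k. ?a k * indicator (cball 0 (2^(Suc k))) x)"
    proof -
      have "(\<Sum>j\<in>{k}. ?a j * indicator (cball 0 (2^(Suc j))) x) \<le> (\<Sum>j. ?a j * indicator (cball 0 (2^(Suc j))) x)"
        by (rule sum_le_suminf) auto
      then show ?thesis by (simp only: sum.insert_if finite.emptyI empty_iff if_False sum.empty add_0_right)
    qed
    finally show ?thesis .
  qed auto
  have "(\<integral>\<^sup>+x. ennreal (indicator {x. 1 \<le> norm x} x * norm (x::real^'n) powr (-\<alpha>)) \<partial>lborel)
      \<le> (\<integral>\<^sup>+x. (\<Sum>k. ?a k * indicator (cball (0::real^'n) (2^(Suc k))) x) \<partial>lborel)"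
    by (rule nn_integral_mono) (rule pw)
  also have "\<dots> = (\<Sum>k. \<integral>\<^sup>+x. ?a k * indicator (cball (0::real^'n) (2^(Suc k))) x \<partial>lborel)"
    by (rule nn_integral_suminf) (intro borel_measurable_times_ennreal borel_measurable_const borel_measurable_indicator, simp)
  also have "\<dots> = (\<Sum>k. ?a k * emeasure lborel (cball (0::real^'n) (2^(Suc k))))"
    by (intro suminf_cong nn_integral_cmult_indicator) simp
  also have "\<dots> = (\<Sum>k. ennreal ((V * 2^d) * q^k))"
  proof (intro suminf_cong)
    fix k :: nat
    have "?a k * emeasure lborel (cball (0::real^'n) (2^(Suc k))) = ennreal ((2 powr (-\<alpha>))^k * (V * (2^(Suc k))^d))"
      using emeasure_cball[of "2^(Suc k)" "0::real^'n"] by (simp add: V_def d_def ennreal_mult'[symmetric])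
    also have "(2 powr (-\<alpha>))^k * (V * (2^(Suc k))^d) = (V * 2^d) * q^k"
    proof -
      have e1: "((2::real)^(Suc k))^d = 2^d * (2^d)^k"
        by (metis power_Suc power_mult power_mult_distrib mult.commute)
      have e2: "q = 2^d * 2 powr (-\<alpha>)" unfolding q_def
        by (simp add: powr_diff powr_minus powr_realpow divide_inverse)
      show ?thesis unfolding e1 e2 power_mult_distrib by (simp add: algebra_simps)
    qed
    finally show "?a k * emeasure lborel (cball (0::real^'n) (2^(Suc k))) = ennreal ((V * 2^d) * q^k)" .
  qed
  also have "\<dots> < \<infinity>" using q V by (intro geom_ennreal) auto
  finally show "(\<integral>\<^sup>+x. ennreal (indicator {x. 1 \<le> norm x} x * norm (x::real^'n) powr (-\<alpha>)) \<partial>lborel) < \<infinity>" .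
qed


lemma pow_powr: assumes "(0::real) < b" shows "(b^k) powr a = (b powr a)^k"
proof -
  have 1: "b^k = b powr (real k)" using powr_realpow[of b k] assms by simp
  have 2: "(b powr a)^k = (b powr a) powr (real k)" using powr_realpow[of "b powr a" k] assms by simp
  show ?thesis unfolding 1 2 powr_powr by (simp only: mult.commute)
qed
lemma half_powr: "(1/2::real) powr a = 2 powr (-a)"
proof -
  have "(1/2::real) powr a = 1 powr a / 2 powr a" by (rule powr_divide)
  also have "\<dots> = 2 powr (-a)" by (simp only: powr_one_eq_one powr_minus_divide)
  finally show ?thesis .
qed


lemma int_near:
  fixes \<beta> :: real assumes "\<beta> > - real CARD('n::finite)"
  shows "integrable lborel (\<lambda>x::real^'n. indicator (cball 0 1) x * norm x powr \<beta>)"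
proof (rule integrableI_nonneg)
  show "(\<lambda>x::real^'n. indicator (cball 0 1) x * norm x powr \<beta>) \<in> borel_measurable lborel"
  proof (rule borel_measurable_times)
    show "(\<lambda>x::real^'n. norm x powr \<beta>) \<in> borel_measurable lborel" by measurable
  qed (rule borel_measurable_indicator, simp)
  show "AE x in lborel. 0 \<le> indicator (cball 0 1) x * norm (x::real^'n) powr \<beta>"
    by auto
  define d where "d = CARD('n)"
  define V where "V = unit_ball_vol (real d)"
  define p where "p = 2 powr (-\<beta>)"
  define c where "c = 1 + p"
  define q where "q = p / 2^d"
  have p: "p > 0" by (simp add: p_def)
  have q: "0 \<le> q" "q < 1"
  proof -
    have "q = 2 powr (-\<beta> - real d)" unfolding q_def p_def
      by (simp add: powr_diff powr_realpow)
    moreover have "2 powr (-\<beta> - real d) < 1" using assms by (intro powr_less_one) (auto simp: d_def)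
    ultimately show "0 \<le> q" "q < 1" by auto
  qed
  have V: "V \<ge> 0" by (simp add: V_def)
  let ?a = "\<lambda>k::nat. ennreal (c * p^k)"
  have pw: "ennreal (indicator (cball 0 1) x * norm x powr \<beta>) \<le>
       (\<Sum>k. ?a k * indicator (cball 0 ((1/2)^k)) x)" for x :: "real^'n"
  proof (cases "x \<in> cball 0 1 \<and> x \<noteq> 0")
    case True
    then have x1: "0 < norm x" "norm x \<le> 1" by auto
    obtain k :: nat where k: "(1/2)^(Suc k) < norm x" "norm x \<le> (1/2)^k" using dyadic_le1[OF x1] by blast
    have "norm x powr \<beta> \<le> c * p^k"
    proof (cases "\<beta> \<ge> 0")
      case True
      have "norm x powr \<beta> \<le> ((1/2)^k) powr \<beta>" using k True x1 by (intro powr_mono2) auto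
      also have "\<dots> = p^k" by (simp add: pow_powr half_powr p_def)
      also have "\<dots> \<le> c * p^k" using p by (simp add: c_def algebra_simps)
      finally show ?thesis .
    next
      case False
      have "norm x powr \<beta> \<le> ((1/2)^(Suc k)) powr \<beta>" using k False x1 by (intro powr_mono2') auto
      also have "\<dots> = p * p^k"
      proof -
        have "((1/2::real)^(Suc k)) powr \<beta> = (2 powr -\<beta>)^(Suc k)"
          using pow_powr[of "1/2::real" "Suc k" \<beta>] by (simp only: half_powr)
        then show ?thesis by (simp add: p_def)
      qed
      also have "\<dots> \<le> c * p^k" using p by (simp add: c_def algebra_simps)
      finally show ?thesis .
    qed
    then have "ennreal (indicator (cball 0 1) x * norm x powr \<beta>) \<le> ?a k * indicator (cball 0 ((1/2)^k)) x"
      using True k by (auto intro: ennreal_leI)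
    also have "\<dots> \<le> (\<Sum>k. ?a k * indicator (cball 0 ((1/2)^k)) x)"
    proof -
      have "(\<Sum>j\<in>{k}. ?a j * indicator (cball 0 ((1/2)^j)) x) \<le> (\<Sum>j. ?a j * indicator (cball 0 ((1/2)^j)) x)"
        by (rule sum_le_suminf) auto
      then show ?thesis by (simp only: sum.insert_if finite.emptyI empty_iff if_False sum.empty add_0_right)
    qed
    finally show ?thesis .
  next
    case False
    then have z: "indicator (cball 0 1) x * norm x powr \<beta> = 0" by (auto simp: indicator_def)
    show ?thesis unfolding z ennreal_0 by (rule zero_le)
  qed
  have "(\<integral>\<^sup>+x. ennreal (indicator (cball 0 1) x * norm (x::real^'n) powr \<beta>) \<partial>lborel)
      \<le> (\<integral>\<^sup>+x. (\<Sum>k. ?a k * indicator (cball (0::real^'n) ((1/2)^k)) x) \<partial>lborel)"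
    by (rule nn_integral_mono) (rule pw)
  also have "\<dots> = (\<Sum>k. \<integral>\<^sup>+x. ?a k * indicator (cball (0::real^'n) ((1/2)^k)) x \<partial>lborel)"
    by (rule nn_integral_suminf) (intro borel_measurable_times_ennreal borel_measurable_const borel_measurable_indicator, simp)
  also have "\<dots> = (\<Sum>k. ?a k * emeasure lborel (cball (0::real^'n) ((1/2)^k)))"
    by (intro suminf_cong nn_integral_cmult_indicator) simp
  also have "\<dots> = (\<Sum>k. ennreal ((c * V) * q^k))"
  proof (intro suminf_cong)
    fix k :: nat
    have "?a k * emeasure lborel (cball (0::real^'n) ((1/2)^k)) = ennreal ((c * p^k) * (V * ((1/2)^k)^d))"
      using emeasure_cball[of "(1/2)^k" "0::real^'n"] p by (simp add: V_def d_def c_def ennreal_mult'[symmetric])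
    also have "(c * p^k) * (V * ((1/2)^k)^d) = (c * V) * q^k"
      by (simp add: q_def power_mult_distrib power_divide power_mult[symmetric] mult.commute mult.left_commute)
    finally show "?a k * emeasure lborel (cball (0::real^'n) ((1/2)^k)) = ennreal ((c * V) * q^k)" .
  qed
  also have "\<dots> < \<infinity>" using q V p by (intro geom_ennreal) (auto simp: c_def)
  finally show "(\<integral>\<^sup>+x. ennreal (indicator (cball 0 1) x * norm (x::real^'n) powr \<beta>) \<partial>lborel) < \<infinity>" .
qed



lemma lborel_distr_uminus_vec: "distr lborel borel (uminus :: real^'n::finite \<Rightarrow> _) = lborel"
  using lborel_affine[of "-1::real" "0::real^'n"] by (simp add: density_1)

lemma integral_translate:
  fixes f :: "real^'n::finite \<Rightarrow> real"
  assumes [measurable]: "f \<in> borel_measurable borel"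
  shows "(\<integral>x. f (c + x) \<partial>lborel) = (\<integral>x. f x \<partial>lborel)"
proof -
  have "(\<integral>x. f x \<partial>lborel) = (\<integral>x. f x \<partial>(distr lborel borel ((+) c)))"
    by (simp add: lborel_distr_plus)
  also have "\<dots> = (\<integral>x. f (c + x) \<partial>lborel)"
    by (rule integral_distr) simp_all
  finally show ?thesis by simp
qed

lemma integrable_translate:
  fixes f :: "real^'n::finite \<Rightarrow> real"
  assumes "integrable lborel f"
  shows "integrable lborel (\<lambda>x. f (c + x))"
proof -
  have [measurable]: "f \<in> borel_measurable borel" using assms by simp
  have "integrable (distr lborel borel ((+) c)) f" by (simp add: lborel_distr_plus assms)
  then show ?thesis by (subst (asm) integrable_distr_eq) simp_all
qed

lemma integral_reflect:
  fixes f :: "real^'n::finite \<Rightarrow> real"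
  assumes [measurable]: "f \<in> borel_measurable borel"
  shows "(\<integral>x. f (- x) \<partial>lborel) = (\<integral>x. f x \<partial>lborel)"
proof -
  have "(\<integral>x. f x \<partial>lborel) = (\<integral>x. f x \<partial>(distr lborel borel uminus))"
    by (simp add: lborel_distr_uminus_vec)
  also have "\<dots> = (\<integral>x. f (- x) \<partial>lborel)"
    by (rule integral_distr) simp_all
  finally show ?thesis by simp
qed

lemma integrable_w:
  fixes \<alpha> :: real assumes "\<alpha> > real CARD('n::finite)"
  shows "integrable lborel (\<lambda>x::real^'n. (1 + norm x) powr (-\<alpha>))"
proof (rule Bochner_Integration.integrable_bound)
  show "integrable lborel (\<lambda>x::real^'n. indicator (cball 0 1) x + indicator {x. 1 \<le> norm x} x * norm x powr (-\<alpha>))"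
    by (intro Bochner_Integration.integrable_add int_far assms integrable_real_indicator) (auto simp: emeasure_cball)
  show "(\<lambda>x::real^'n. (1 + norm x) powr (-\<alpha>)) \<in> borel_measurable lborel" by measurable
  show "AE x in lborel. norm ((1 + norm x) powr (-\<alpha>)) \<le> norm (indicator (cball 0 1) x + indicator {x. 1 \<le> norm x} x * norm (x::real^'n) powr (-\<alpha>))"
  proof (intro AE_I2)
    fix x :: "real^'n"
    have pos: "\<alpha> > 0" using assms by (metis of_nat_0_le_iff order_le_less_trans)
    show "norm ((1 + norm x) powr (-\<alpha>)) \<le> norm (indicator (cball 0 1) x + indicator {x. 1 \<le> norm x} x * norm (x::real^'n) powr (-\<alpha>))"
    proof (cases "norm x \<le> 1")
      case True
      have f1: "(1 + norm x) powr (-\<alpha>) \<le> 1" using powr_mono2'[of "-\<alpha>" 1 "1+norm x"] pos by simp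
      have nn: "0 \<le> indicator {x. 1 \<le> norm x} x * norm x powr (-\<alpha>)" by simp
      have ind: "indicator (cball 0 1) x = (1::real)" using True by (simp add: indicator_def)
      have "(1 + norm x) powr (-\<alpha>) \<le> 1 + indicator {x. 1 \<le> norm x} x * norm x powr (-\<alpha>)"
        using f1 nn by linarith
      then show ?thesis using nn by (simp add: ind)
    next
      case False
      have "(1 + norm x) powr (-\<alpha>) \<le> norm x powr (-\<alpha>)" using False pos by (intro powr_mono2') auto
      then show ?thesis using False by (simp add: indicator_def)
    qed
  qed
qed



lemma mvt1d:
  fixes \<psi> \<psi>' :: "real \<Rightarrow> real"
  assumes der: "\<And>t. (\<psi> has_real_derivative \<psi>' t) (at t)"
    and bd: "\<And>t. \<bar>t\<bar> \<le> \<bar>a\<bar> \<Longrightarrow> \<bar>\<psi>' t - c\<bar> \<le> K"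
  shows "\<bar>\<psi> a - \<psi> 0 - a * c\<bar> \<le> K * \<bar>a\<bar>"
proof -
  define g0 where "g0 t = \<psi> t - c * t" for t
  have dg0: "(g0 has_real_derivative (\<psi>' t - c)) (at t)" for t
    unfolding g0_def by (auto intro!: derivative_eq_intros der)
  have eq: "\<psi> a - \<psi> 0 - a * c = g0 a - g0 0" by (simp add: g0_def algebra_simps)
  consider "a > 0" | "a < 0" | "a = 0" by linarith
  then show ?thesis
  proof cases
    case 1
    obtain z where z: "0 < z" "z < a" "g0 a - g0 0 = (a - 0) * (\<psi>' z - c)"
      using MVT2[OF 1, of g0 "\<lambda>t. \<psi>' t - c"] dg0 by blast
    have "\<bar>\<psi>' z - c\<bar> \<le> K" using z 1 by (intro bd) auto
    then show ?thesis unfolding eq z(3) using 1 by (simp add: abs_mult mult.commute mult_left_mono)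
  next
    case 2
    obtain z where z: "a < z" "z < 0" "g0 0 - g0 a = (0 - a) * (\<psi>' z - c)"
      using MVT2[OF 2, of g0 "\<lambda>t. \<psi>' t - c"] dg0 by blast
    have "\<bar>\<psi>' z - c\<bar> \<le> K" using z 2 by (intro bd) auto
    moreover have "\<bar>g0 a - g0 0\<bar> = \<bar>a\<bar> * \<bar>\<psi>' z - c\<bar>"
    proof -
      have "(0 - a) * (\<psi>' z - c) = - (a * (\<psi>' z - c))" by simp
      then have "g0 a - g0 0 = a * (\<psi>' z - c)" using z(3) by linarith
      then show ?thesis by (simp add: abs_mult)
    qed
    ultimately show ?thesis unfolding eq using mult_right_mono[of "\<bar>\<psi>' z - c\<bar>" K "\<bar>a\<bar>"] by (simp add: mult.commute)
  next
    case 3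
    then show ?thesis by simp
  qed
qed

definition restr :: "'n::finite set \<Rightarrow> real^'n \<Rightarrow> real^'n" where
  "restr S h = (\<chi> j. if j \<in> S then h $ j else 0)"

lemma restr_insert: "i \<notin> S \<Longrightarrow> restr (insert i S) h = restr S h + (h $ i) *\<^sub>R axis i 1"
  by (auto simp: restr_def vec_eq_iff axis_def)

lemma restr_UNIV: "restr UNIV h = h"
  by (simp add: restr_def vec_eq_iff)

lemma restr_empty: "restr {} h = 0"
  by (simp add: restr_def vec_eq_iff)

lemma taylor_path:
  fixes \<phi> :: "real^'n::finite \<Rightarrow> real" and D :: "'n \<Rightarrow> real^'n \<Rightarrow> real"
  assumes der: "\<And>x i. ((\<lambda>t. \<phi> (x + t *\<^sub>R axis i 1)) has_real_derivative D i x) (at 0)"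
    and bd: "\<And>i y. (\<forall>j. \<bar>(y - u) $ j\<bar> \<le> \<bar>h $ j\<bar>) \<Longrightarrow> \<bar>D i y - c i\<bar> \<le> K"
  shows "\<bar>\<phi> (u + h) - \<phi> u - (\<Sum>i\<in>UNIV. h $ i * c i)\<bar> \<le> K * (\<Sum>i\<in>UNIV. \<bar>h $ i\<bar>)"
proof -
  have "\<bar>\<phi> (u + restr S h) - \<phi> u - (\<Sum>i\<in>S. h $ i * c i)\<bar> \<le> K * (\<Sum>i\<in>S. \<bar>h $ i\<bar>)" for S
  proof (induction S rule: finite_induct[OF finite])
    case 1
    then show ?case by (simp add: restr_empty)
  next
    case (2 i S)
    define p where "p = u + restr S h"
    define \<psi> where "\<psi> t = \<phi> (p + t *\<^sub>R axis i 1)" for t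
    have d\<psi>: "(\<psi> has_real_derivative D i (p + t *\<^sub>R axis i 1)) (at t)" for t
    proof -
      have "((\<lambda>s. \<phi> ((p + t *\<^sub>R axis i 1) + s *\<^sub>R axis i 1)) has_real_derivative D i (p + t *\<^sub>R axis i 1)) (at 0)"
        by (rule der)
      then have "((\<lambda>s. \<psi> (s + t)) has_real_derivative D i (p + t *\<^sub>R axis i 1)) (at 0)"
        by (simp add: \<psi>_def scaleR_add_left add.assoc add.commute add.left_commute)
      then show ?thesis using DERIV_shift[of \<psi> _ 0 t] by simp
    qed
    have b\<psi>: "\<bar>D i (p + t *\<^sub>R axis i 1) - c i\<bar> \<le> K" if "\<bar>t\<bar> \<le> \<bar>h $ i\<bar>" for t
    proof (rule bd, intro allI)
      fix j
      show "\<bar>(p + t *\<^sub>R axis i 1 - u) $ j\<bar> \<le> \<bar>h $ j\<bar>"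
        using that 2(2) by (auto simp: p_def restr_def axis_def)
    qed
    have step: "\<bar>\<psi> (h $ i) - \<psi> 0 - h $ i * c i\<bar> \<le> K * \<bar>h $ i\<bar>"
      by (rule mvt1d[OF d\<psi> b\<psi>])
    have e1: "\<phi> (u + restr (insert i S) h) = \<psi> (h $ i)"
      using 2(2) by (simp add: restr_insert \<psi>_def p_def add.assoc)
    have e2: "\<phi> (u + restr S h) = \<psi> 0" by (simp add: \<psi>_def p_def)
    show ?case
      using 2(1,2) 2(3) step unfolding e1 e2 by (simp add: algebra_simps)
  qed
  from this[of UNIV] show ?thesis by (simp add: restr_UNIV)
qed

lemma lip_path:
  fixes \<phi> :: "real^'n::finite \<Rightarrow> real" and D :: "'n \<Rightarrow> real^'n \<Rightarrow> real"
  assumes der: "\<And>x i. ((\<lambda>t. \<phi> (x + t *\<^sub>R axis i 1)) has_real_derivative D i x) (at 0)"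
    and bd: "\<And>i y. (\<forall>j. \<bar>(y - u) $ j\<bar> \<le> \<bar>h $ j\<bar>) \<Longrightarrow> \<bar>D i y\<bar> \<le> K"
  shows "\<bar>\<phi> (u + h) - \<phi> u\<bar> \<le> K * (\<Sum>i\<in>UNIV. \<bar>h $ i\<bar>)"
  using taylor_path[of \<phi> D u h "\<lambda>_. 0" K] der bd by simp

lemma second_diff:
  fixes f :: "real^'n::finite \<Rightarrow> real" and Df :: "'n \<Rightarrow> real^'n \<Rightarrow> real"
    and D2 :: "'n \<Rightarrow> 'n \<Rightarrow> real^'n \<Rightarrow> real"
  assumes d1: "\<And>x i. ((\<lambda>t. f (x + t *\<^sub>R axis i 1)) has_real_derivative Df i x) (at 0)"
    and d2: "\<And>x i j. ((\<lambda>t. Df i (x + t *\<^sub>R axis j 1)) has_real_derivative D2 j i x) (at 0)"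
    and bd: "\<And>i j y. (\<forall>k. \<bar>(y - u) $ k\<bar> \<le> \<bar>h $ k\<bar>) \<Longrightarrow> \<bar>D2 j i y\<bar> \<le> K"
  shows "\<bar>f (u + h) + f (u - h) - 2 * f u\<bar> \<le> 2 * K * (\<Sum>k\<in>UNIV. \<bar>h $ k\<bar>)^2"
proof -
  define S1 where "S1 = (\<Sum>k\<in>UNIV. \<bar>h $ k\<bar>)"
  have lipD: "\<bar>Df i y - Df i u\<bar> \<le> K * S1" if y: "\<forall>k. \<bar>(y - u) $ k\<bar> \<le> \<bar>h $ k\<bar>" for i y
  proof -
    have "\<bar>Df i (u + (y - u)) - Df i u\<bar> \<le> K * (\<Sum>k\<in>UNIV. \<bar>(y - u) $ k\<bar>)"
    proof (rule lip_path[of "Df i" "\<lambda>j. D2 j i"])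
      show "((\<lambda>t. Df i (x + t *\<^sub>R axis j 1)) has_real_derivative D2 j i x) (at 0)" for x j by (rule d2)
      fix j y' assume "\<forall>k. \<bar>(y' - u) $ k\<bar> \<le> \<bar>(y - u) $ k\<bar>"
      then have "\<forall>k. \<bar>(y' - u) $ k\<bar> \<le> \<bar>h $ k\<bar>" using y by (meson order_trans)
      then show "\<bar>D2 j i y'\<bar> \<le> K" by (rule bd)
    qed
    moreover have "K \<ge> 0"
    proof -
      have "\<bar>D2 i i u\<bar> \<le> K" by (rule bd) simp
      then show ?thesis by linarith
    qed
    moreover have "(\<Sum>k\<in>UNIV. \<bar>(y - u) $ k\<bar>) \<le> S1" unfolding S1_def using y by (intro sum_mono) auto
    ultimately show ?thesis by (simp add: mult_left_mono order_trans)
  qed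
  have A: "\<bar>f (u + h) - f u - (\<Sum>i\<in>UNIV. h $ i * Df i u)\<bar> \<le> (K * S1) * S1"
    unfolding S1_def by (rule taylor_path[OF d1 lipD[unfolded S1_def]])
  have B: "\<bar>f (u + (-h)) - f u - (\<Sum>i\<in>UNIV. (-h) $ i * Df i u)\<bar> \<le> (K * S1) * (\<Sum>i\<in>UNIV. \<bar>(-h) $ i\<bar>)"
    by (rule taylor_path[OF d1 lipD]) simp
  have B': "\<bar>f (u - h) - f u + (\<Sum>i\<in>UNIV. h $ i * Df i u)\<bar> \<le> (K * S1) * S1"
    using B by (simp add: S1_def sum_negf)
  have "\<bar>f (u + h) + f (u - h) - 2 * f u\<bar> \<le> (K * S1) * S1 + (K * S1) * S1"
    using A B' by linarith
  then show ?thesis by (simp add: S1_def power2_eq_square algebra_simps)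
qed



lemma powr_div_neg:
  fixes x k a :: real assumes "0 < x" "0 < k"
  shows "(x / k) powr (-a) = k powr a * x powr (-a)"
proof -
  have "(x / k) powr (-a) = x powr (-a) / k powr (-a)" by (rule powr_divide)
  also have "\<dots> = k powr a * x powr (-a)" by (simp add: powr_minus divide_inverse)
  finally show ?thesis .
qed

lemma onep: "0 < 1 + norm (x::'a::real_normed_vector)"
  using norm_ge_zero[of x] by linarith

lemma W1:
  fixes u y :: "'a::real_normed_vector" assumes "norm (y - u) \<le> 1" "a \<ge> 0"
  shows "(1 + norm y) powr (-a) \<le> 2 powr a * (1 + norm u) powr (-a)"
proof -
  have "norm u \<le> norm y + norm (y - u)" by (metis norm_triangle_sub norm_minus_commute)
  then have "1 + norm u \<le> 2 + 2 * norm y" using assms norm_ge_zero[of y] by linarith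
  then have "(1 + norm u) / 2 \<le> 1 + norm y" by simp
  then have "(1 + norm y) powr (-a) \<le> ((1 + norm u) / 2) powr (-a)"
    using assms norm_ge_zero[of u] by (intro powr_mono2') (auto intro: add_pos_nonneg)
  also have "\<dots> = 2 powr a * (1 + norm u) powr (-a)"
    by (rule powr_div_neg) (auto simp: onep)
  finally show ?thesis .
qed

lemma W2:
  fixes u v h :: "'a::real_normed_vector"
  assumes "norm h \<ge> 1" "norm v \<ge> norm u - norm h" "a \<ge> 0"
  shows "(1 + norm v) powr (-a) * norm h powr (-a)
     \<le> 2 powr a * (1 + norm u) powr (-a) * norm h powr (-a) + 3 powr a * (1 + norm u) powr (-a) * (1 + norm v) powr (-a)"
proof -
  have p1: "0 \<le> 2 powr a * (1 + norm u) powr (-a) * norm h powr (-a)" by simp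
  have p2: "0 \<le> 3 powr a * (1 + norm u) powr (-a) * (1 + norm v) powr (-a)" by simp
  show ?thesis
  proof (cases "norm h \<le> norm u / 2")
    case True
    then have "1 + norm u \<le> 2 + 2 * norm v" using assms norm_ge_zero[of v] by linarith
    then have "(1 + norm u) / 2 \<le> 1 + norm v" by simp
    then have "(1 + norm v) powr (-a) \<le> ((1 + norm u) / 2) powr (-a)"
      using assms norm_ge_zero[of u] by (intro powr_mono2') (auto intro: add_pos_nonneg)
    also have "\<dots> = 2 powr a * (1 + norm u) powr (-a)" by (rule powr_div_neg) (auto simp: onep)
    finally have "(1 + norm v) powr (-a) * norm h powr (-a) \<le> 2 powr a * (1 + norm u) powr (-a) * norm h powr (-a)"
      by (intro mult_right_mono) auto
    then show ?thesis using p2 by linarith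
  next
    case False
    then have "(1 + norm u) / 3 \<le> norm h" using assms by simp
    then have "norm h powr (-a) \<le> ((1 + norm u) / 3) powr (-a)"
      using assms norm_ge_zero[of u] by (intro powr_mono2') (auto intro: add_pos_nonneg)
    also have "\<dots> = 3 powr a * (1 + norm u) powr (-a)" by (rule powr_div_neg) (auto simp: onep)
    finally have "(1 + norm v) powr (-a) * norm h powr (-a) \<le> (1 + norm v) powr (-a) * (3 powr a * (1 + norm u) powr (-a))"
      by (intro mult_left_mono) auto
    moreover have "(1 + norm v) powr (-a) * (3 powr a * (1 + norm u) powr (-a)) = 3 powr a * (1 + norm u) powr (-a) * (1 + norm v) powr (-a)"
      by (simp add: mult_ac)
    ultimately show ?thesis using p1 by linarith
  qed
qed



definition wt :: "real \<Rightarrow> real^'n::finite \<Rightarrow> real" where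
  "wt a x = (1 + norm x) powr (-a)"

lemma wt_nonneg: "0 \<le> wt a x" by (simp add: wt_def)

lemma sum_abs_le_norm: "(\<Sum>k\<in>UNIV. \<bar>h $ k\<bar>) \<le> real CARD('n::finite) * norm (h::real^'n)"
proof -
  have "(\<Sum>k\<in>UNIV. \<bar>h $ k\<bar>) \<le> (\<Sum>k\<in>(UNIV::'n set). norm h)"
    by (intro sum_mono component_le_norm_cart)
  then show ?thesis by simp
qed

lemma g_bound:
  fixes f :: "real^'n::finite \<Rightarrow> real" and Df :: "'n \<Rightarrow> real^'n \<Rightarrow> real"
    and D2 :: "'n \<Rightarrow> 'n \<Rightarrow> real^'n \<Rightarrow> real"
  assumes d1: "\<And>x i. ((\<lambda>t. f (x + t *\<^sub>R axis i 1)) has_real_derivative Df i x) (at 0)"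
    and d2: "\<And>x i j. ((\<lambda>t. Df i (x + t *\<^sub>R axis j 1)) has_real_derivative D2 j i x) (at 0)"
    and bf: "\<And>x. \<bar>f x\<bar> \<le> C * wt \<alpha> x"
    and bD2: "\<And>x i j. \<bar>D2 j i x\<bar> \<le> C * wt \<alpha> x"
    and a0: "\<alpha> \<ge> 0" and C0: "C \<ge> 0"
  shows "\<bar>(2 * f u - f (u + h) - f (u - h)) / (2 * norm h powr \<alpha>)\<bar>
    \<le> wt \<alpha> u * ((C * 2 powr \<alpha> * real CARD('n)^2) * (indicator (cball 0 1) h * norm h powr (2 - \<alpha>))
        + (C * (1 + 2 powr \<alpha>)) * (indicator {x. 1 \<le> norm x} h * norm h powr (-\<alpha>))
        + (C * 3 powr \<alpha>) * (wt \<alpha> (u + h) + wt \<alpha> (u - h)))"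
    (is "?L \<le> wt \<alpha> u * (?t1 + ?t2 + ?t3)")
proof -
  define d where "d = real CARD('n)"
  define A where "A = wt \<alpha> u"
  define N where "N = norm h"
  have A0: "A \<ge> 0" by (simp add: A_def wt_nonneg)
  have t1: "?t1 \<ge> 0" using C0 by simp
  have t2: "?t2 \<ge> 0" using C0 by simp
  have t3: "?t3 \<ge> 0" using C0 by (simp add: wt_nonneg)
  have "h = 0 \<or> (h \<noteq> 0 \<and> N \<le> 1) \<or> N > 1" by linarith
  then consider "h = 0" | "h \<noteq> 0" "N \<le> 1" | "N > 1" by blast
  then show ?thesis
  proof cases
    case 1
    have L0: "?L = 0" using 1 a0 by simp
    have R0: "0 \<le> wt \<alpha> u * (?t1 + ?t2 + ?t3)" using A0 t1 t2 t3 unfolding A_def by simp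
    show ?thesis unfolding L0 by (rule R0)
  next
    case 2
    have Npos: "N > 0" using 2 by (simp add: N_def)
    define K where "K = C * 2 powr \<alpha> * A"
    have sd: "\<bar>f (u + h) + f (u - h) - 2 * f u\<bar> \<le> 2 * K * (\<Sum>k\<in>UNIV. \<bar>h $ k\<bar>)^2"
    proof (rule second_diff[OF d1 d2])
      fix i j y assume y: "\<forall>k. \<bar>(y - u) $ k\<bar> \<le> \<bar>h $ k\<bar>"
      have "norm (y - u) \<le> norm h" using y by (intro norm_le_componentwise_cart) simp
      then have "norm (y - u) \<le> 1" using 2 by (simp add: N_def)
      then have "wt \<alpha> y \<le> 2 powr \<alpha> * A" unfolding wt_def A_def by (rule W1) (rule a0)
      then have "C * wt \<alpha> y \<le> C * (2 powr \<alpha> * A)" using C0 by (rule mult_left_mono)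
      then show "\<bar>D2 j i y\<bar> \<le> K" using bD2[of j i y] by (simp add: K_def mult.assoc)
    qed
    have K0: "K \<ge> 0" using C0 A0 by (simp add: K_def)
    have "(\<Sum>k\<in>UNIV. \<bar>h $ k\<bar>)^2 \<le> (d * N)^2"
      using sum_abs_le_norm[of h] by (intro power_mono) (auto simp: d_def N_def intro: sum_nonneg)
    then have "2 * K * (\<Sum>k\<in>UNIV. \<bar>h $ k\<bar>)^2 \<le> 2 * K * (d * N)^2"
      using K0 by (intro mult_left_mono) auto
    with sd have num: "\<bar>2 * f u - f (u + h) - f (u - h)\<bar> \<le> 2 * K * (d * N)^2" by simp
    have Na: "N powr \<alpha> > 0" using Npos by simp
    have "?L = \<bar>2 * f u - f (u + h) - f (u - h)\<bar> / (2 * N powr \<alpha>)"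
      using Na by (simp add: N_def abs_divide)
    also have "\<dots> \<le> 2 * K * (d * N)^2 / (2 * N powr \<alpha>)"
      using num Na by (intro divide_right_mono) auto
    also have "\<dots> = K * d^2 * (N^2 / N powr \<alpha>)"
      by (simp add: power_mult_distrib)
    also have "N^2 / N powr \<alpha> = N powr (2 - \<alpha>)"
      using Npos by (simp add: powr_diff powr_numeral)
    also have "K * d^2 * N powr (2 - \<alpha>) = A * ?t1"
      using 2 by (simp add: K_def d_def N_def indicator_def mult_ac)
    also have "A * ?t1 \<le> A * (?t1 + ?t2 + ?t3)"
      using A0 t2 t3 by (intro mult_left_mono) auto
    finally show ?thesis by (simp add: A_def)
  next
    case 3
    define B1 where "B1 = wt \<alpha> (u + h)"
    define B2 where "B2 = wt \<alpha> (u - h)"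
    define P where "P = N powr (-\<alpha>)"
    define X where "X = \<bar>2 * f u - f (u + h) - f (u - h)\<bar>"
    have P0: "P \<ge> 0" by (simp add: P_def)
    have B10: "B1 \<ge> 0" "B2 \<ge> 0" by (simp_all add: B1_def B2_def wt_nonneg)
    have num: "X \<le> 2 * (C * A) + C * B1 + C * B2"
    proof -
      have "X \<le> 2 * \<bar>f u\<bar> + \<bar>f (u + h)\<bar> + \<bar>f (u - h)\<bar>" unfolding X_def by linarith
      also have "\<dots> \<le> 2 * (C * A) + C * B1 + C * B2"
        using bf[of u] bf[of "u + h"] bf[of "u - h"] by (simp add: A_def B1_def B2_def)
      finally show ?thesis .
    qed
    have Na: "N powr \<alpha> > 0" using 3 by simp
    have LP: "?L = X * P / 2"
    proof -
      have "?L = X / (2 * N powr \<alpha>)"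
        using Na by (simp add: N_def abs_divide X_def)
      also have "\<dots> = X * P / 2"
        by (simp add: P_def powr_minus_divide)
      finally show ?thesis .
    qed
    have w1: "B1 * P \<le> 2 powr \<alpha> * A * P + 3 powr \<alpha> * A * B1"
      unfolding B1_def A_def P_def wt_def N_def
    proof (rule W2)
      show "1 \<le> norm h" using 3 by (simp add: N_def)
      show "norm u - norm h \<le> norm (u + h)" by (rule norm_diff_ineq)
    qed (rule a0)
    have w2: "B2 * P \<le> 2 powr \<alpha> * A * P + 3 powr \<alpha> * A * B2"
      unfolding B2_def A_def P_def wt_def N_def
    proof (rule W2)
      show "1 \<le> norm h" using 3 by (simp add: N_def)
      show "norm u - norm h \<le> norm (u - h)" by (rule norm_triangle_ineq2)
    qed (rule a0)
    have XP: "X * P \<le> (2 * (C * A) + C * B1 + C * B2) * P"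
      using num P0 by (rule mult_right_mono)
    have e1: "(2 * (C * A) + C * B1 + C * B2) * P = 2 * (C * A * P) + C * (B1 * P) + C * (B2 * P)"
      by (simp add: algebra_simps)
    have m1: "C * (B1 * P) \<le> C * (2 powr \<alpha> * A * P + 3 powr \<alpha> * A * B1)" using w1 C0 by (rule mult_left_mono)
    have m2: "C * (B2 * P) \<le> C * (2 powr \<alpha> * A * P + 3 powr \<alpha> * A * B2)" using w2 C0 by (rule mult_left_mono)
    have e2: "C * (2 powr \<alpha> * A * P + 3 powr \<alpha> * A * B1) = C * 2 powr \<alpha> * (A * P) + C * 3 powr \<alpha> * (A * B1)"
      by (simp add: algebra_simps)
    have e3: "C * (2 powr \<alpha> * A * P + 3 powr \<alpha> * A * B2) = C * 2 powr \<alpha> * (A * P) + C * 3 powr \<alpha> * (A * B2)"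
      by (simp add: algebra_simps)
    have e4: "C * A * P = C * (A * P)" by simp
    have e5: "A * (?t2 + ?t3) = (C * (A * P) + C * 2 powr \<alpha> * (A * P)) + (C * 3 powr \<alpha> * (A * B1) + C * 3 powr \<alpha> * (A * B2))"
      using 3 by (simp add: P_def B1_def B2_def N_def indicator_def algebra_simps)
    have p3: "0 \<le> C * 3 powr \<alpha> * (A * B1) + C * 3 powr \<alpha> * (A * B2)" using C0 A0 B10 by simp
    have "2 * ?L \<le> 2 * (A * (?t2 + ?t3))"
      unfolding LP using XP e1 m1 m2 e2 e3 e4 e5 p3 by linarith
    then have "?L \<le> A * (?t2 + ?t3)" by simp
    also have "\<dots> \<le> A * (?t1 + ?t2 + ?t3)"
      using A0 t1 by (intro mult_left_mono) auto
    finally show ?thesis by (simp add: A_def)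
  qed
qed



lemma integrable_reflect:
  fixes f :: "real^'n::finite \<Rightarrow> real"
  assumes "integrable lborel f"
  shows "integrable lborel (\<lambda>x. f (- x))"
proof -
  have [measurable]: "f \<in> borel_measurable borel" using assms by simp
  have "integrable (distr lborel borel uminus) f" by (simp add: lborel_distr_uminus_vec assms)
  then show ?thesis by (subst (asm) integrable_distr_eq) simp_all
qed

lemma wt_le1: "\<alpha> \<ge> 0 \<Longrightarrow> wt \<alpha> x \<le> 1"
  unfolding wt_def using powr_mono2'[of "-\<alpha>" 1 "1 + norm x"] by simp

lemma main_pv:
  fixes f :: "real^'n::finite \<Rightarrow> real" and Df :: "'n \<Rightarrow> real^'n \<Rightarrow> real"
    and D2 :: "'n \<Rightarrow> 'n \<Rightarrow> real^'n \<Rightarrow> real"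
  assumes d1: "\<And>x i. ((\<lambda>t. f (x + t *\<^sub>R axis i 1)) has_real_derivative Df i x) (at 0)"
    and d2: "\<And>x i j. ((\<lambda>t. Df i (x + t *\<^sub>R axis j 1)) has_real_derivative D2 j i x) (at 0)"
    and bf: "\<And>x. \<bar>f x\<bar> \<le> C * wt \<alpha> x"
    and bD2: "\<And>x i j. \<bar>D2 j i x\<bar> \<le> C * wt \<alpha> x"
    and cont: "continuous_on UNIV f"
    and C0: "C \<ge> 0" and \<gamma>: "0 < \<gamma>" "\<gamma> < 2" and \<alpha>: "\<alpha> = real CARD('n) + \<gamma>"
  shows "\<exists>L. ((\<lambda>\<epsilon>. LINT v:{v. dist v u \<ge> \<epsilon>}|lborel. (f u - f v) / dist v u powr \<alpha>) \<longlongrightarrow> L) (at_right 0)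
     \<and> \<bar>L\<bar> \<le> ((C * 2 powr \<alpha> * real CARD('n)^2) * (\<integral>h. indicator (cball 0 1) h * norm (h::real^'n) powr (2 - \<alpha>) \<partial>lborel)
        + (C * (1 + 2 powr \<alpha>)) * (\<integral>h. indicator {x. 1 \<le> norm x} h * norm (h::real^'n) powr (-\<alpha>) \<partial>lborel)
        + (C * 3 powr \<alpha>) * (2 * (\<integral>h. wt \<alpha> (h::real^'n) \<partial>lborel))) * wt \<alpha> u"
proof -
  have fm[measurable]: "f \<in> borel_measurable borel" using cont by (rule borel_measurable_continuous_onI)
  have a0: "\<alpha> \<ge> 0" "\<alpha> > real CARD('n)" using \<alpha> \<gamma> by auto
  define Q1 where "Q1 = C * 2 powr \<alpha> * real CARD('n)^2"
  define Q2 where "Q2 = C * (1 + 2 powr \<alpha>)"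
  define Q3 where "Q3 = C * 3 powr \<alpha>"
  define a1 where "a1 h = indicator (cball 0 1) h * norm (h::real^'n) powr (2 - \<alpha>)" for h
  define a2 where "a2 h = indicator {x. 1 \<le> norm x} h * norm (h::real^'n) powr (-\<alpha>)" for h
  define g where "g h = (2 * f u - f (u + h) - f (u - h)) / (2 * norm h powr \<alpha>)" for h
  define \<Phi> where "\<Phi> h = wt \<alpha> u * (Q1 * a1 h + Q2 * a2 h + Q3 * (wt \<alpha> (u + h) + wt \<alpha> (u - h)))" for h
  have gb: "\<bar>g h\<bar> \<le> \<Phi> h" for h
    unfolding g_def \<Phi>_def Q1_def Q2_def Q3_def a1_def a2_def
    by (rule g_bound[OF d1 d2 bf bD2 a0(1) C0])
  have int1: "integrable lborel a1" unfolding a1_def by (rule int_near) (use \<alpha> \<gamma> in simp)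
  have int2: "integrable lborel a2" unfolding a2_def by (rule int_far) (use a0 in simp)
  have intw: "integrable lborel (wt \<alpha> :: real^'n \<Rightarrow> real)"
    using integrable_w[OF a0(2)] by (simp add: wt_def[abs_def])
  have int3: "integrable lborel (\<lambda>h. wt \<alpha> (u + h))" by (rule integrable_translate[OF intw])
  have eqm: "(\<lambda>h. wt \<alpha> (u - h)) = (\<lambda>h. wt \<alpha> (- u + h))"
    by (simp add: wt_def norm_minus_commute)
  have int4: "integrable lborel (\<lambda>h. wt \<alpha> (u - h))" unfolding eqm by (rule integrable_translate[OF intw])
  have wm[measurable]: "wt \<alpha> \<in> borel_measurable borel" unfolding wt_def[abs_def] by measurable
  have intPhi: "integrable lborel \<Phi>"
    unfolding \<Phi>_def by (intro integrable_mult_right Bochner_Integration.integrable_add int1 int2 int3 int4)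
  have intPhi_eq: "(\<integral>h. \<Phi> h \<partial>lborel) = (Q1 * (\<integral>h. a1 h \<partial>lborel) + Q2 * (\<integral>h. a2 h \<partial>lborel) + Q3 * (2 * (\<integral>h. wt \<alpha> (h::real^'n) \<partial>lborel))) * wt \<alpha> u"
  proof -
    have t3: "(\<integral>h. wt \<alpha> (u + h) \<partial>lborel) = (\<integral>h. wt \<alpha> (h::real^'n) \<partial>lborel)" using integral_translate[OF wm, of u] by simp
    have t4: "(\<integral>h. wt \<alpha> (u - h) \<partial>lborel) = (\<integral>h. wt \<alpha> (h::real^'n) \<partial>lborel)" unfolding eqm using integral_translate[OF wm, of "-u"] by simp
    show ?thesis unfolding \<Phi>_def
      using int1 int2 int3 int4 t3 t4
      by (simp add: Bochner_Integration.integral_add integrable_mult_right Bochner_Integration.integrable_add algebra_simps)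
  qed
  have gm[measurable]: "g \<in> borel_measurable lborel" unfolding g_def by measurable
  have intg: "integrable lborel g"
    by (rule Bochner_Integration.integrable_bound[OF intPhi gm]) (use gb in \<open>auto intro!: AE_I2 intro: order_trans[OF _ abs_ge_self]\<close>)
  have Lb: "\<bar>\<integral>h. g h \<partial>lborel\<bar> \<le> (\<integral>h. \<Phi> h \<partial>lborel)"
  proof -
    have "\<bar>\<integral>h. g h \<partial>lborel\<bar> \<le> (\<integral>h. \<bar>g h\<bar> \<partial>lborel)" by (rule integral_abs_bound)
    also have "\<dots> \<le> (\<integral>h. \<Phi> h \<partial>lborel)"
      using intg intPhi gb by (intro integral_mono) auto
    finally show ?thesis .
  qed
  define F' where "F' \<epsilon> = (\<integral>h. indicator {h. \<epsilon> \<le> norm h} h * g h \<partial>lborel)" for \<epsilon>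
  have lim': "(F' \<longlongrightarrow> (\<integral>h. g h \<partial>lborel)) (at_right 0)"
  proof -
    have "((\<lambda>t. \<integral>h. indicator {h. inverse t \<le> norm h} h * g h \<partial>lborel) \<longlongrightarrow> (\<integral>h. g h \<partial>lborel)) at_top"
    proof (rule integral_dominated_convergence_at_top[where w=\<Phi>])
      show "g \<in> borel_measurable lborel" by (rule gm)
      show "(\<lambda>h. indicator {h. inverse t \<le> norm h} h * g h) \<in> borel_measurable lborel" for t :: real
        by measurable
      show "integrable lborel \<Phi>" by (rule intPhi)
      show "AE h in lborel. ((\<lambda>t. indicator {h. inverse t \<le> norm h} h * g h) \<longlongrightarrow> g h) at_top"
      proof (rule AE_I2)
        fix h :: "real^'n"
        show "((\<lambda>t. indicator {h. inverse t \<le> norm h} h * g h) \<longlongrightarrow> g h) at_top"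
        proof (cases "h = 0")
          case True
          then have "g h = 0" by (simp add: g_def)
          then show ?thesis by simp
        next
          case False
          then have hp: "norm h > 0" by simp
          have "\<forall>\<^sub>F t in at_top. indicator {h. inverse t \<le> norm h} h * g h = g h"
            unfolding eventually_at_top_linorder
          proof (intro exI allI impI)
            fix t assume "inverse (norm h) \<le> t"
            then have "inverse t \<le> inverse (inverse (norm h))"
              using hp by (intro le_imp_inverse_le) auto
            then show "indicator {h. inverse t \<le> norm h} h * g h = g h" using hp by simp
          qed
          then show ?thesis by (rule tendsto_eventually)
        qed
      qed
      show "\<forall>\<^sub>F t in at_top. AE h in lborel. norm (indicator {h. inverse t \<le> norm h} h * g h) \<le> \<Phi> h"
      proof (intro always_eventually allI AE_I2)
        fix t :: real and h :: "real^'n"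
        have "norm (indicator {h. inverse t \<le> norm h} h * g h) \<le> \<bar>g h\<bar>"
          by (simp add: indicator_def)
        then show "norm (indicator {h. inverse t \<le> norm h} h * g h) \<le> \<Phi> h" using gb[of h] by linarith
      qed
    qed
    then show ?thesis unfolding F'_def by (subst filterlim_at_right_to_top)
  qed
  have eqF: "(LINT v:{v. dist v u \<ge> \<epsilon>}|lborel. (f u - f v) / dist v u powr \<alpha>) = F' \<epsilon>" if ep: "\<epsilon> > 0" for \<epsilon>
  proof -
    define a where "a h = indicator {h. \<epsilon> \<le> norm h} h * ((f u - f (u + h)) / norm h powr \<alpha>)" for h :: "real^'n"
    define G where "G v = indicator {v. \<epsilon> \<le> dist v u} v * ((f u - f v) / dist v u powr \<alpha>)" for v :: "real^'n"
    have Gm[measurable]: "G \<in> borel_measurable borel" unfolding G_def by measurable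
    have am[measurable]: "a \<in> borel_measurable borel" unfolding a_def by measurable
    have s1: "(LINT v:{v. dist v u \<ge> \<epsilon>}|lborel. (f u - f v) / dist v u powr \<alpha>) = (\<integral>h. a h \<partial>lborel)"
    proof -
      have "(LINT v:{v. dist v u \<ge> \<epsilon>}|lborel. (f u - f v) / dist v u powr \<alpha>) = (\<integral>v. G v \<partial>lborel)"
        by (simp add: set_lebesgue_integral_def G_def)
      also have "\<dots> = (\<integral>h. G (u + h) \<partial>lborel)" by (rule integral_translate[symmetric]) (rule Gm)
      also have "\<dots> = (\<integral>h. a h \<partial>lborel)" by (simp add: G_def a_def dist_norm indicator_def)
      finally show ?thesis .
    qed
    have s2: "(\<integral>h. a h \<partial>lborel) = (\<integral>h. a (- h) \<partial>lborel)" by (rule integral_reflect[symmetric]) (rule am)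
    have Cb: "\<bar>f x\<bar> \<le> C" for x
      using bf[of x] wt_le1[OF a0(1), of x] C0 by (meson mult_left_le order_trans wt_nonneg)
    define B where "B h = 2 * C * (a2 h + \<epsilon> powr (-\<alpha>) * indicator (cball 0 1) h)" for h :: "real^'n"
    have intB: "integrable lborel B" unfolding B_def
      by (intro integrable_mult_right Bochner_Integration.integrable_add int2 integrable_real_indicator) (auto simp: emeasure_cball)
    have ab: "\<bar>a h\<bar> \<le> B h" for h
    proof (cases "\<epsilon> \<le> norm h")
      case False
      then show ?thesis using C0 by (simp add: a_def B_def a2_def)
    next
      case True
      have hp: "norm h > 0" using True ep by linarith
      have num: "\<bar>f u - f (u + h)\<bar> \<le> 2 * C" using Cb[of u] Cb[of "u + h"] by linarith
      have "\<bar>a h\<bar> = \<bar>f u - f (u + h)\<bar> * norm h powr (-\<alpha>)"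
        using True hp by (simp add: a_def abs_divide powr_minus divide_inverse abs_mult)
      also have "\<dots> \<le> 2 * C * norm h powr (-\<alpha>)" using num by (intro mult_right_mono) auto
      also have "\<dots> \<le> B h"
      proof (cases "1 \<le> norm h")
        case True
        have "0 \<le> \<epsilon> powr (-\<alpha>) * indicator (cball 0 1) h" by simp
        then have "norm h powr (-\<alpha>) \<le> a2 h + \<epsilon> powr (-\<alpha>) * indicator (cball 0 1) h"
          using True by (simp add: a2_def)
        then show ?thesis using C0 unfolding B_def by (simp add: mult.assoc mult_left_mono)
      next
        case False
        have "norm h powr (-\<alpha>) \<le> \<epsilon> powr (-\<alpha>)" using True ep a0 by (intro powr_mono2') auto
        then have "2 * C * norm h powr (-\<alpha>) \<le> 2 * C * (\<epsilon> powr (-\<alpha>))" using C0 by (intro mult_left_mono) auto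
        then show ?thesis using False C0 by (simp add: B_def a2_def indicator_def)
      qed
      finally show ?thesis .
    qed
    have inta: "integrable lborel a"
      by (rule Bochner_Integration.integrable_bound[OF intB]) (use ab in \<open>auto intro!: AE_I2 intro: order_trans[OF _ abs_ge_self]\<close>)
    have inta': "integrable lborel (\<lambda>h. a (- h))" by (rule integrable_reflect[OF inta])
    have pw: "(a h + a (- h)) / 2 = indicator {h. \<epsilon> \<le> norm h} h * g h" for h
    proof (cases "\<epsilon> \<le> norm h")
      case True
      have "norm h > 0" using True ep by linarith
      then have pp: "norm h powr \<alpha> > 0" by simp
      show ?thesis using True pp by (simp add: a_def g_def field_simps)
    qed (simp add: a_def)
    have "(\<integral>h. a h \<partial>lborel) = ((\<integral>h. a h \<partial>lborel) + (\<integral>h. a (- h) \<partial>lborel)) / 2" using s2 by simp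
    also have "\<dots> = (\<integral>h. (a h + a (- h)) / 2 \<partial>lborel)"
      using inta inta' by (simp add: Bochner_Integration.integral_add)
    also have "\<dots> = F' \<epsilon>" unfolding F'_def pw ..
    finally show ?thesis using s1 by simp
  qed
  have "((\<lambda>\<epsilon>. LINT v:{v. dist v u \<ge> \<epsilon>}|lborel. (f u - f v) / dist v u powr \<alpha>) \<longlongrightarrow> (\<integral>h. g h \<partial>lborel)) (at_right 0)"
    using lim' by (rule Lim_transform_eventually) (auto simp: eqF eventually_at_right_less intro: eventually_mono[OF eventually_at_right_less])
  then show ?thesis using Lb intPhi_eq by (auto simp: Q1_def Q2_def Q3_def a1_def a2_def)
qed



lemma finite_len: "finite {is::'n::finite list. length is = m}"
  using finite_lists_length_eq[of "UNIV::'n set" m] by simp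

lemma pderivs_le_bracket:
  assumes "length is \<le> 2"
  shows "\<bar>pderivs is f x\<bar> \<le> bracket 2 f (x::real^'n::finite)"
proof -
  define S where "S = (\<Sum>m\<in>{1..2::nat}. \<Sum>is\<in>{is::'n list. length is = m}. \<bar>pderivs is f x\<bar>)"
  have S0: "S \<ge> 0" unfolding S_def by (intro sum_nonneg) auto
  have br: "bracket 2 f x = \<bar>f x\<bar> + S" by (simp add: bracket_def S_def)
  show ?thesis
  proof (cases "is = []")
    case True
    then show ?thesis using S0 br by simp
  next
    case False
    define m where "m = length is"
    have m: "m \<in> {1..2}" using False assms by (auto simp: m_def Suc_le_eq)
    have "\<bar>pderivs is f x\<bar> \<le> (\<Sum>is'\<in>{is'::'n list. length is' = m}. \<bar>pderivs is' f x\<bar>)"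
      by (rule member_le_sum) (auto simp: m_def finite_len)
    also have "\<dots> \<le> S" unfolding S_def
      by (rule member_le_sum[where f="\<lambda>m. \<Sum>is'\<in>{is'::'n list. length is' = m}. \<bar>pderivs is' f x\<bar>"]) (use m in \<open>auto intro: sum_nonneg\<close>)
    finally show ?thesis using br by (simp add: abs_ge_zero)
  qed
qed

lemma bracket_nonneg: "0 \<le> bracket 2 f (x::real^'n::finite)"
  using pderivs_le_bracket[of "[]" f x] by simp

lemma one_plus_pow: "(0::real) \<le> t \<Longrightarrow> (1 + t)^N \<le> 2^N * (1 + t^N)"
proof (cases "t \<le> 1")
  case True
  assume t: "0 \<le> t"
  have "(1 + t)^N \<le> 2^N" using True t by (intro power_mono) auto
  also have "\<dots> \<le> 2^N * (1 + t^N)" using t by simp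
  finally show ?thesis .
next
  case False
  assume t: "0 \<le> t"
  have "(1 + t)^N \<le> (2 * t)^N" using False t by (intro power_mono) auto
  also have "\<dots> = 2^N * t^N" by (simp add: power_mult_distrib)
  also have "\<dots> \<le> 2^N * (1 + t^N)" by simp
  finally show ?thesis .
qed

lemma decay:
  assumes "G \<in> Sk T 2" "\<alpha> \<ge> 0"
  shows "\<exists>C\<ge>0. \<forall>s\<in>{0..T}. \<forall>x::real^'n::finite. \<forall>is. length is \<le> 2 \<longrightarrow> \<bar>pderivs is (G s) x\<bar> \<le> C * wt \<alpha> x"
proof -
  have dec: "\<forall>r::nat. \<forall>j\<le>2. \<exists>M. \<forall>s\<in>{0..T}. \<forall>u::real^'n. norm u ^ r * bracket j (G s) u \<le> M"
    using assms(1) by (simp add: Sk_def)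
  define N where "N = nat \<lceil>\<alpha>\<rceil>"
  obtain M0 where M0: "\<And>s u. s \<in> {0..T} \<Longrightarrow> norm (u::real^'n) ^ 0 * bracket 2 (G s) u \<le> M0"
    using dec by blast
  obtain MN where MN: "\<And>s u. s \<in> {0..T} \<Longrightarrow> norm (u::real^'n) ^ N * bracket 2 (G s) u \<le> MN"
    using dec by blast
  define C where "C = 2^N * (\<bar>M0\<bar> + \<bar>MN\<bar>)"
  have C0: "C \<ge> 0" by (simp add: C_def)
  have main: "bracket 2 (G s) x \<le> C * wt \<alpha> x" if s: "s \<in> {0..T}" for s and x :: "real^'n"
  proof -
    define b where "b = bracket 2 (G s) x"
    define t where "t = norm x"
    have b0: "b \<ge> 0" by (simp add: b_def bracket_nonneg)
    have t0: "t \<ge> 0" by (simp add: t_def)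
    have "(1 + t)^N * b \<le> 2^N * (1 + t^N) * b" using one_plus_pow[OF t0] b0 by (rule mult_right_mono)
    also have "\<dots> = 2^N * (b + t^N * b)" by (simp add: algebra_simps)
    also have "\<dots> \<le> C" unfolding C_def
    proof (rule mult_left_mono)
      have "b \<le> \<bar>M0\<bar>" using M0[OF s, of x] by (simp add: b_def)
      moreover have "t^N * b \<le> \<bar>MN\<bar>" using MN[OF s, of x] by (simp add: b_def t_def)
      ultimately show "b + t^N * b \<le> \<bar>M0\<bar> + \<bar>MN\<bar>" by linarith
    qed simp
    finally have A: "(1 + t)^N * b \<le> C" .
    have "(1 + t) powr \<alpha> \<le> (1 + t) powr (real N)"
      using t0 real_nat_ceiling_ge[of \<alpha>] by (intro powr_mono) (auto simp: N_def)
    also have "\<dots> = (1 + t)^N" using t0 by (simp add: powr_realpow)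
    finally have "(1 + t) powr \<alpha> * b \<le> C" using A b0 by (meson mult_right_mono order_trans)
    moreover have pos: "(1 + t) powr \<alpha> > 0" using t0 by simp
    ultimately have "b \<le> C / (1 + t) powr \<alpha>" by (simp add: field_simps)
    also have "\<dots> = C * wt \<alpha> x" by (simp add: wt_def t_def powr_minus divide_inverse)
    finally show ?thesis by (simp add: b_def)
  qed
  show ?thesis
    using C0 main pderivs_le_bracket order_trans by blast
qed



theorem mainTheorem10:
  fixes T \<gamma> :: real and G :: "real \<Rightarrow> real^'n::finite \<Rightarrow> real"
  assumes "T > 0" and "0 < \<gamma>" and "\<gamma> < 2"
    and "G \<in> S_gamma T \<gamma>"
  shows "\<exists>H C. integrable lborel H \<and> C > 0 \<and>
           (\<forall>u. (\<forall>s\<in>{0..T}. \<bar>frac_lap \<gamma> (G s) u\<bar> \<le> H u) \<and> H u \<le> C)"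
proof -
  define \<alpha> where "\<alpha> = real CARD('n) + \<gamma>"
  have a0: "\<alpha> \<ge> 0" "\<alpha> > real CARD('n)" using assms by (auto simp: \<alpha>_def)
  have GS: "G \<in> Sk T 2" using assms(4) by (auto simp: S_gamma_def Sk_c_def split: if_splits)
  obtain C where C0: "C \<ge> 0"
    and Cb: "\<And>s x is. s \<in> {0..T} \<Longrightarrow> length is \<le> 2 \<Longrightarrow> \<bar>pderivs is (G s) x\<bar> \<le> C * wt \<alpha> x"
    using decay[OF GS a0(1)] by blast
  have diff: "\<And>is i s x. length is < 2 \<Longrightarrow> s \<ge> 0 \<Longrightarrow>
      (\<lambda>t. pderivs is (G s) (x + t *\<^sub>R axis i 1)) differentiable (at 0)"
    using GS by (simp add: Sk_def)
  have contall: "\<forall>is. length is \<le> 2 \<longrightarrow> continuous_on ({0..} \<times> UNIV) (\<lambda>(s, x). pderivs is (G s) x)"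
    using GS by (simp add: Sk_def)
  have contG: "continuous_on ({0..} \<times> UNIV) (\<lambda>(s, x). pderivs [] (G s) x)"
    using contall[rule_format, of "[]"] by simp
  define E where "E = ((C * 2 powr \<alpha> * real CARD('n)^2) * (\<integral>h. indicator (cball 0 1) h * norm (h::real^'n) powr (2 - \<alpha>) \<partial>lborel)
        + (C * (1 + 2 powr \<alpha>)) * (\<integral>h. indicator {x. 1 \<le> norm x} h * norm (h::real^'n) powr (-\<alpha>) \<partial>lborel)
        + (C * 3 powr \<alpha>) * (2 * (\<integral>h. wt \<alpha> (h::real^'n) \<partial>lborel)))"
  define c where "c = c_gamma \<gamma> TYPE('n)"
  define H where "H u = \<bar>c\<bar> * \<bar>E\<bar> * wt \<alpha> u" for u :: "real^'n"
  have intw: "integrable lborel (wt \<alpha> :: real^'n \<Rightarrow> real)"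
    using integrable_w[OF a0(2)] by (simp add: wt_def[abs_def])
  have intH: "integrable lborel H" unfolding H_def by (intro integrable_mult_right intw)
  have bound: "\<bar>frac_lap \<gamma> (G s) u\<bar> \<le> H u" if s: "s \<in> {0..T}" for s u
  proof -
    have s0: "s \<ge> 0" using s by simp
    define f where "f = G s"
    have d1: "((\<lambda>t. f (x + t *\<^sub>R axis i 1)) has_real_derivative pderiv_i i f x) (at 0)" for x i
    proof -
      have "(\<lambda>t. pderivs [] (G s) (x + t *\<^sub>R axis i 1)) differentiable (at 0)" by (rule diff) (use s0 in auto)
      then show ?thesis unfolding pderiv_i_def f_def by (simp add: DERIV_deriv_iff_real_differentiable)
    qed
    have d2: "((\<lambda>t. pderiv_i i f (x + t *\<^sub>R axis j 1)) has_real_derivative pderiv_i j (pderiv_i i f) x) (at 0)" for x i j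
    proof -
      have "(\<lambda>t. pderivs [i] (G s) (x + t *\<^sub>R axis j 1)) differentiable (at 0)" by (rule diff) (use s0 in auto)
      then show ?thesis unfolding pderiv_i_def[of j] f_def by (simp add: DERIV_deriv_iff_real_differentiable)
    qed
    have bf: "\<bar>f x\<bar> \<le> C * wt \<alpha> x" for x using Cb[OF s, of "[]" x] by (simp add: f_def)
    have bD2: "\<bar>pderiv_i j (pderiv_i i f) x\<bar> \<le> C * wt \<alpha> x" for x i j
      using Cb[OF s, of "[j, i]" x] by (simp add: f_def)
    have cont: "continuous_on UNIV f"
    proof -
      have "continuous_on UNIV ((\<lambda>(s, x). pderivs [] (G s) x) \<circ> (\<lambda>x. (s, x)))"
        by (rule continuous_on_compose[OF continuous_on_Pair[OF continuous_on_const continuous_on_id]])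
           (rule continuous_on_subset[OF contG], use s0 in auto)
      then show ?thesis by (simp add: f_def o_def)
    qed
    obtain L where L: "((\<lambda>\<epsilon>. LINT v:{v. dist v u \<ge> \<epsilon>}|lborel. (f u - f v) / dist v u powr \<alpha>) \<longlongrightarrow> L) (at_right 0)"
      and Lb: "\<bar>L\<bar> \<le> E * wt \<alpha> u"
      using main_pv[OF d1 d2 bf bD2 cont C0 assms(2,3) \<alpha>_def, of u] unfolding E_def by blast
    have "frac_lap \<gamma> (G s) u = c * L"
      unfolding frac_lap_def c_def f_def[symmetric] \<alpha>_def[symmetric]
      using tendsto_Lim[OF trivial_limit_at_right_real L] by simp
    then have "\<bar>frac_lap \<gamma> (G s) u\<bar> = \<bar>c\<bar> * \<bar>L\<bar>" by (simp add: abs_mult)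
    also have "\<dots> \<le> \<bar>c\<bar> * (\<bar>E\<bar> * wt \<alpha> u)"
    proof (rule mult_left_mono)
      have "E * wt \<alpha> u \<le> \<bar>E\<bar> * wt \<alpha> u" by (intro mult_right_mono) (auto simp: wt_nonneg)
      then show "\<bar>L\<bar> \<le> \<bar>E\<bar> * wt \<alpha> u" using Lb by linarith
    qed simp
    finally show ?thesis by (simp add: H_def mult.assoc)
  qed
  have Hle: "H u \<le> \<bar>c\<bar> * \<bar>E\<bar> + 1" for u
  proof -
    have "H u \<le> \<bar>c\<bar> * \<bar>E\<bar> * 1" unfolding H_def
      by (intro mult_left_mono wt_le1 a0(1)) auto
    then show ?thesis by simp
  qed
  have "\<bar>c\<bar> * \<bar>E\<bar> + 1 > 0" by (simp add: add_nonneg_pos)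
  then show ?thesis using intH bound Hle by blast
qed


end
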